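(* Let $M$ be a graded quasi-primaryful $R$-module. Then the set of all irreducible components of $qp.Spec_g(M)$ (quasi-Zariski topology) is $$\Phi=\{qp\text{-}V_M^g(Gr(q)M)\mid q\in qp\text{-}V_R^g(\mathrm{Ann}(M))\text{ and }Gr(q)\text{ is a minimal element of }V_R^g(\mathrm{Ann}(M))\text{ with respect to inclusion}\}.$$
   Context: $R=\bigoplus_{g\in G}R_g$ is a graded commutative ring with identity graded by a group $G$, $h(R)=\bigcup_g R_g$; $M$ is a graded $R$-module, $h(M)$ its homogeneous elements. $Gr(I)$ is the graded radical of a graded ideal $I$. $(K:_RM)=\{r: rM\subseteq K\}$. Graded prime submodule: proper graded $P$ with $rm\in P$ ($r\in h(R), m\in h(M)$) implying $m\in P$ or $r\in(P:_RM)$. $Gr_M(K)$: intersection of graded prime submodules containing $K$ ($M$ if none). Graded primeful property of $K$: for each graded prime $p\supseteq(K:_RM)$ there is a graded prime submodule $P\supseteq K$ with $(P:_RM)=p$. Graded quasi-primary submodule: proper graded $Q$ with $rm\in Q$ ($r\in h(R),m\in h(M)$) implying $r\in Gr((Q:_RM))$ or $m\in Gr_M(Q)$. $qp.Spec_g(M)$: graded quasi-primary submodules with the graded primeful property. $qp\text{-}V_M^g(K)=\{Q\in qp.Spec_g(M): Gr((Q:_RM))\supseteq Gr((K:_RM))\}$; the quasi-Zariski topology has closed sets exactly these. A graded quasi-primary ideal of $R$ is a proper graded ideal $q$ with $ab\in q$ ($a,b\in h(R)$) implying $a\in Gr(q)$ or $b\in Gr(q)$. For a graded ideal $I$: $qp\text{-}V_R^g(I)$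 is the set of graded quasi-primary ideals of $R$ containing $I$, and $V_R^g(I)$ the set of graded prime ideals of $R$ containing $I$. $M$ is graded quasi-primaryful if $M=0$, or $M\ne 0$ and for every $q\in qp\text{-}V_R^g(\mathrm{Ann}(M))$ there is $Q\in qp.Spec_g(M)$ with $Gr((Q:_RM))=Gr(q)$. An irreducible component is a maximal irreducible subset (a subset $A$ is irreducible if $A\subseteq A_1\cup A_2$, $A_i$ closed, implies $A\subseteq A_1$ or $A\subseteq A_2$). *)

theory Defs
  imports Complex_Main
begin

text \<open>The ring R is the whole type 'a (class comm_ring_1), the module M is the
whole type 'b, with scalar multiplication scale satisfying the library locale module.
The grading group G is the type 'g (class group_add, written additively, not necessarily
commutative).\<close>

definition hom_dec :: "('g \<Rightarrow> 'x::ab_group_add set) \<Rightarrow> 'x \<Rightarrow> ('g \<Rightarrow> 'x) \<Rightarrow> bool" where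
  "hom_dec A x c \<longleftrightarrow> finite {g. c g \<noteq> 0} \<and> (\<forall>g. c g \<in> A g) \<and> x = sum c {g. c g \<noteq> 0}"

definition graded_decomp :: "('g \<Rightarrow> 'x::ab_group_add set) \<Rightarrow> bool" where
  "graded_decomp A \<longleftrightarrow> (\<forall>g. 0 \<in> A g \<and> (\<forall>x\<in>A g. \<forall>y\<in>A g. x - y \<in> A g))
     \<and> (\<forall>x. \<exists>!c. hom_dec A x c)"

definition graded_ring :: "('g::group_add \<Rightarrow> 'a::comm_ring_1 set) \<Rightarrow> bool" where
  "graded_ring Rg \<longleftrightarrow> graded_decomp Rg \<and>
     (\<forall>g h. \<forall>a\<in>Rg g. \<forall>b\<in>Rg h. a * b \<in> Rg (g + h))"

definition graded_module ::
  "('g::group_add \<Rightarrow> 'a::comm_ring_1 set) \<Rightarrow> ('g \<Rightarrow> 'b::ab_group_add set) \<Rightarrow> ('a \<Rightarrow> 'b \<Rightarrow> 'b) \<Rightarrow> bool" where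
  "graded_module Rg Mg scale \<longleftrightarrow> graded_ring Rg \<and> module scale \<and> graded_decomp Mg \<and>
     (\<forall>g h. \<forall>r\<in>Rg g. \<forall>m\<in>Mg h. scale r m \<in> Mg (g + h))"

definition hset :: "('g \<Rightarrow> 'x set) \<Rightarrow> 'x set" where
  "hset A = (\<Union>g. A g)"

definition graded_subset :: "('g \<Rightarrow> 'x::ab_group_add set) \<Rightarrow> 'x set \<Rightarrow> bool" where
  "graded_subset A N \<longleftrightarrow> (\<forall>x\<in>N. \<exists>c. hom_dec A x c \<and> (\<forall>g. c g \<in> N))"

definition is_ideal :: "'a::comm_ring_1 set \<Rightarrow> bool" where
  "is_ideal I \<longleftrightarrow> 0 \<in> I \<and> (\<forall>x\<in>I. \<forall>y\<in>I. x + y \<in> I) \<and> (\<forall>r. \<forall>x\<in>I. r * x \<in> I)"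

definition gr_ideal :: "('g \<Rightarrow> 'a::comm_ring_1 set) \<Rightarrow> 'a set \<Rightarrow> bool" where
  "gr_ideal Rg I \<longleftrightarrow> is_ideal I \<and> graded_subset Rg I"

definition gr_submodule :: "('g \<Rightarrow> 'b::ab_group_add set) \<Rightarrow> ('a::comm_ring_1 \<Rightarrow> 'b \<Rightarrow> 'b) \<Rightarrow> 'b set \<Rightarrow> bool" where
  "gr_submodule Mg scale N \<longleftrightarrow> module.subspace scale N \<and> graded_subset Mg N"

definition colon :: "('a::comm_ring_1 \<Rightarrow> 'b::ab_group_add \<Rightarrow> 'b) \<Rightarrow> 'b set \<Rightarrow> 'a set" where
  "colon scale K = {r. \<forall>m. scale r m \<in> K}"

definition Ann :: "('a::comm_ring_1 \<Rightarrow> 'b::ab_group_add \<Rightarrow> 'b) \<Rightarrow> 'a set" where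
  "Ann scale = colon scale {0}"

definition Gr :: "('g \<Rightarrow> 'a::comm_ring_1 set) \<Rightarrow> 'a set \<Rightarrow> 'a set" where
  "Gr Rg I = {x. \<exists>c. hom_dec Rg x c \<and> (\<forall>g. \<exists>n>0. c g ^ n \<in> I)}"

definition gr_prime_ideal :: "('g \<Rightarrow> 'a::comm_ring_1 set) \<Rightarrow> 'a set \<Rightarrow> bool" where
  "gr_prime_ideal Rg p \<longleftrightarrow> gr_ideal Rg p \<and> p \<noteq> UNIV \<and>
     (\<forall>a\<in>hset Rg. \<forall>b\<in>hset Rg. a * b \<in> p \<longrightarrow> a \<in> p \<or> b \<in> p)"

definition gr_qp_ideal :: "('g \<Rightarrow> 'a::comm_ring_1 set) \<Rightarrow> 'a set \<Rightarrow> bool" where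
  "gr_qp_ideal Rg q \<longleftrightarrow> gr_ideal Rg q \<and> q \<noteq> UNIV \<and>
     (\<forall>a\<in>hset Rg. \<forall>b\<in>hset Rg. a * b \<in> q \<longrightarrow> a \<in> Gr Rg q \<or> b \<in> Gr Rg q)"

definition gr_prime_sub ::
  "('g \<Rightarrow> 'a::comm_ring_1 set) \<Rightarrow> ('g \<Rightarrow> 'b::ab_group_add set) \<Rightarrow> ('a \<Rightarrow> 'b \<Rightarrow> 'b) \<Rightarrow> 'b set \<Rightarrow> bool" where
  "gr_prime_sub Rg Mg scale P \<longleftrightarrow> gr_submodule Mg scale P \<and> P \<noteq> UNIV \<and>
     (\<forall>r\<in>hset Rg. \<forall>m\<in>hset Mg. scale r m \<in> P \<longrightarrow> m \<in> P \<or> r \<in> colon scale P)"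

text \<open>Gr_M(K); the intersection of the empty family is UNIV = M\<close>
definition GrM ::
  "('g \<Rightarrow> 'a::comm_ring_1 set) \<Rightarrow> ('g \<Rightarrow> 'b::ab_group_add set) \<Rightarrow> ('a \<Rightarrow> 'b \<Rightarrow> 'b) \<Rightarrow> 'b set \<Rightarrow> 'b set" where
  "GrM Rg Mg scale K = \<Inter> {P. gr_prime_sub Rg Mg scale P \<and> K \<subseteq> P}"

definition primeful ::
  "('g \<Rightarrow> 'a::comm_ring_1 set) \<Rightarrow> ('g \<Rightarrow> 'b::ab_group_add set) \<Rightarrow> ('a \<Rightarrow> 'b \<Rightarrow> 'b) \<Rightarrow> 'b set \<Rightarrow> bool" where
  "primeful Rg Mg scale K \<longleftrightarrow> (\<forall>p. gr_prime_ideal Rg p \<and> colon scale K \<subseteq> p \<longrightarrow>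
     (\<exists>P. gr_prime_sub Rg Mg scale P \<and> K \<subseteq> P \<and> colon scale P = p))"

definition gr_qp_sub ::
  "('g \<Rightarrow> 'a::comm_ring_1 set) \<Rightarrow> ('g \<Rightarrow> 'b::ab_group_add set) \<Rightarrow> ('a \<Rightarrow> 'b \<Rightarrow> 'b) \<Rightarrow> 'b set \<Rightarrow> bool" where
  "gr_qp_sub Rg Mg scale Q \<longleftrightarrow> gr_submodule Mg scale Q \<and> Q \<noteq> UNIV \<and>
     (\<forall>r\<in>hset Rg. \<forall>m\<in>hset Mg. scale r m \<in> Q \<longrightarrow>
        r \<in> Gr Rg (colon scale Q) \<or> m \<in> GrM Rg Mg scale Q)"

definition qpSpec ::
  "('g \<Rightarrow> 'a::comm_ring_1 set) \<Rightarrow> ('g \<Rightarrow> 'b::ab_group_add set) \<Rightarrow> ('a \<Rightarrow> 'b \<Rightarrow> 'b) \<Rightarrow> 'b set set" where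
  "qpSpec Rg Mg scale = {Q. gr_qp_sub Rg Mg scale Q \<and> primeful Rg Mg scale Q}"

definition qpVM ::
  "('g \<Rightarrow> 'a::comm_ring_1 set) \<Rightarrow> ('g \<Rightarrow> 'b::ab_group_add set) \<Rightarrow> ('a \<Rightarrow> 'b \<Rightarrow> 'b) \<Rightarrow> 'b set \<Rightarrow> 'b set set" where
  "qpVM Rg Mg scale K = {Q \<in> qpSpec Rg Mg scale.
     Gr Rg (colon scale K) \<subseteq> Gr Rg (colon scale Q)}"

definition qp_closed ::
  "('g \<Rightarrow> 'a::comm_ring_1 set) \<Rightarrow> ('g \<Rightarrow> 'b::ab_group_add set) \<Rightarrow> ('a \<Rightarrow> 'b \<Rightarrow> 'b) \<Rightarrow> 'b set set \<Rightarrow> bool" where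
  "qp_closed Rg Mg scale A \<longleftrightarrow> (\<exists>K. gr_submodule Mg scale K \<and> A = qpVM Rg Mg scale K)"

definition qp_irreducible ::
  "('g \<Rightarrow> 'a::comm_ring_1 set) \<Rightarrow> ('g \<Rightarrow> 'b::ab_group_add set) \<Rightarrow> ('a \<Rightarrow> 'b \<Rightarrow> 'b) \<Rightarrow> 'b set set \<Rightarrow> bool" where
  "qp_irreducible Rg Mg scale A \<longleftrightarrow> A \<noteq> {} \<and> A \<subseteq> qpSpec Rg Mg scale \<and>
     (\<forall>A1 A2. qp_closed Rg Mg scale A1 \<and> qp_closed Rg Mg scale A2 \<and> A \<subseteq> A1 \<union> A2
        \<longrightarrow> A \<subseteq> A1 \<or> A \<subseteq> A2)"

definition qp_irr_components ::
  "('g \<Rightarrow> 'a::comm_ring_1 set) \<Rightarrow> ('g \<Rightarrow> 'b::ab_group_add set) \<Rightarrow> ('a \<Rightarrow> 'b \<Rightarrow> 'b) \<Rightarrow> 'b set set set" where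
  "qp_irr_components Rg Mg scale = {A. qp_irreducible Rg Mg scale A \<and>
     (\<forall>B. qp_irreducible Rg Mg scale B \<and> A \<subseteq> B \<longrightarrow> B = A)}"

definition qpVR :: "('g \<Rightarrow> 'a::comm_ring_1 set) \<Rightarrow> 'a set \<Rightarrow> 'a set set" where
  "qpVR Rg I = {q. gr_qp_ideal Rg q \<and> I \<subseteq> q}"

definition VR :: "('g \<Rightarrow> 'a::comm_ring_1 set) \<Rightarrow> 'a set \<Rightarrow> 'a set set" where
  "VR Rg I = {p. gr_prime_ideal Rg p \<and> I \<subseteq> p}"

definition ideal_times_M :: "('a::comm_ring_1 \<Rightarrow> 'b::ab_group_add \<Rightarrow> 'b) \<Rightarrow> 'a set \<Rightarrow> 'b set" where
  "ideal_times_M scale I = module.span scale {scale r m | r m. r \<in> I}"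

definition quasi_primaryful ::
  "('g \<Rightarrow> 'a::comm_ring_1 set) \<Rightarrow> ('g \<Rightarrow> 'b::ab_group_add set) \<Rightarrow> ('a \<Rightarrow> 'b \<Rightarrow> 'b) \<Rightarrow> bool" where
  "quasi_primaryful Rg Mg scale \<longleftrightarrow> (UNIV :: 'b set) = {0} \<or>
     ((UNIV :: 'b set) \<noteq> {0} \<and> (\<forall>q\<in>qpVR Rg (Ann scale).
        \<exists>Q\<in>qpSpec Rg Mg scale. Gr Rg (colon scale Q) = Gr Rg q))"

end

theory Submission
  imports Defs
begin


lemma gd_zero: "graded_decomp A \<Longrightarrow> 0 \<in> A g"
  by (simp add: graded_decomp_def)

lemma gd_diff: "graded_decomp A \<Longrightarrow> x \<in> A g \<Longrightarrow> y \<in> A g \<Longrightarrow> x - y \<in> A g"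
  by (simp add: graded_decomp_def)

lemma gd_uminus: "graded_decomp A \<Longrightarrow> x \<in> A g \<Longrightarrow> - x \<in> A g"
  using gd_diff[of A 0 g x] gd_zero by fastforce

lemma gd_add: "graded_decomp A \<Longrightarrow> x \<in> A g \<Longrightarrow> y \<in> A g \<Longrightarrow> x + y \<in> A g"
  using gd_diff[of A x g "-y"] gd_uminus by fastforce

lemma gd_ex: "graded_decomp A \<Longrightarrow> \<exists>c. hom_dec A x c"
  by (auto simp: graded_decomp_def)

lemma gd_unique: "graded_decomp A \<Longrightarrow> hom_dec A x c \<Longrightarrow> hom_dec A x d \<Longrightarrow> c = d"
  unfolding graded_decomp_def by blast

lemma hom_decI:
  assumes "finite S" "\<And>g. g \<notin> S \<Longrightarrow> c g = 0" "\<And>g. c g \<in> A g" "x = sum c S"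
  shows "hom_dec A x c"
proof -
  have sub: "{g. c g \<noteq> 0} \<subseteq> S" using assms(2) by blast
  hence fin: "finite {g. c g \<noteq> 0}" using assms(1) finite_subset by blast
  have "sum c S = sum c {g. c g \<noteq> 0}"
    by (rule sum.mono_neutral_right[OF assms(1) sub]) auto
  thus ?thesis using fin assms(3,4) by (simp add: hom_dec_def)
qed

lemma hom_decD:
  assumes "hom_dec A x c" "finite S" "{g. c g \<noteq> 0} \<subseteq> S"
  shows "x = sum c S"
proof -
  have "sum c S = sum c {g. c g \<noteq> 0}"
    by (rule sum.mono_neutral_right[OF assms(2,3)]) auto
  thus ?thesis using assms(1) by (simp add: hom_dec_def)
qed

lemma hom_dec_in: "hom_dec A x c \<Longrightarrow> c g \<in> A g" by (simp add: hom_dec_def)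
lemma hom_dec_fin: "hom_dec A x c \<Longrightarrow> finite {g. c g \<noteq> 0}" by (simp add: hom_dec_def)
lemma hom_dec_sum: "hom_dec A x c \<Longrightarrow> x = sum c {g. c g \<noteq> 0}" by (simp add: hom_dec_def)

lemma hom_dec_single:
  assumes "graded_decomp A" "y \<in> A g"
  shows "hom_dec A y (\<lambda>h. if h = g then y else 0)"
  by (rule hom_decI[where S="{g}"]) (use assms gd_zero in auto)

lemma hom_dec_zero:
  assumes "graded_decomp A"
  shows "hom_dec A 0 (\<lambda>h. 0)"
  by (rule hom_decI[where S="{}"]) (use assms gd_zero in auto)

lemma hom_dec_add:
  assumes "graded_decomp A" "hom_dec A x c" "hom_dec A y d"
  shows "hom_dec A (x + y) (\<lambda>g. c g + d g)"
proof -
  let ?S = "{g. c g \<noteq> 0} \<union> {g. d g \<noteq> 0}"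
  have fin: "finite ?S" using assms(2,3) by (simp add: hom_dec_def)
  have "x = sum c ?S" by (rule hom_decD[OF assms(2) fin]) auto
  moreover have "y = sum d ?S" by (rule hom_decD[OF assms(3) fin]) auto
  ultimately show ?thesis
    by (intro hom_decI[OF fin]) (auto simp: sum.distrib intro!: gd_add[OF assms(1)] hom_dec_in[OF assms(2)] hom_dec_in[OF assms(3)])
qed

lemma hom_dec_shift:
  assumes "\<And>h. t' (t h) = h" "\<And>k. t (t' k) = k" "finite S"
    "\<And>h. h \<notin> S \<Longrightarrow> f h = 0" "\<And>h. f h \<in> A (t h)"
  shows "hom_dec A (sum f S) (\<lambda>k. f (t' k))"
proof (rule hom_decI[where S="t ` S"])
  show "finite (t ` S)" using assms(3) by simp
  show "f (t' k) = 0" if "k \<notin> t ` S" for k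
    using that assms(2,4) by (metis image_eqI)
  show "f (t' k) \<in> A k" for k using assms(5)[of "t' k"] assms(2) by simp
  have "inj_on t S" using assms(1) by (metis inj_on_inverseI)
  then show "sum f S = sum (\<lambda>k. f (t' k)) (t ` S)"
    by (simp add: sum.reindex assms(1))
qed

definition gcomp :: "('g \<Rightarrow> 'x::ab_group_add set) \<Rightarrow> 'x \<Rightarrow> 'g \<Rightarrow> 'x" where
  "gcomp A x = (THE c. hom_dec A x c)"

lemma gcomp_dec: "graded_decomp A \<Longrightarrow> hom_dec A x (gcomp A x)"
  unfolding gcomp_def graded_decomp_def by (metis theI')

lemma gcomp_eq: "graded_decomp A \<Longrightarrow> hom_dec A x c \<Longrightarrow> gcomp A x = c"
  using gcomp_dec gd_unique by metis

lemma graded_subset_dec: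
  assumes "graded_decomp A" "graded_subset A N" "x \<in> N" "hom_dec A x c"
  shows "c g \<in> N"
  using assms unfolding graded_subset_def by (metis gd_unique)

lemma hset_iff: "y \<in> hset A \<longleftrightarrow> (\<exists>g. y \<in> A g)"
  by (auto simp: hset_def)



lemma ideal_0: "is_ideal I \<Longrightarrow> 0 \<in> I" by (simp add: is_ideal_def)
lemma ideal_add: "is_ideal I \<Longrightarrow> x \<in> I \<Longrightarrow> y \<in> I \<Longrightarrow> x + y \<in> I" by (simp add: is_ideal_def)
lemma ideal_mult: "is_ideal I \<Longrightarrow> x \<in> I \<Longrightarrow> r * x \<in> I" by (simp add: is_ideal_def)
lemma ideal_mult2: "is_ideal I \<Longrightarrow> x \<in> I \<Longrightarrow> x * r \<in> I" by (metis ideal_mult mult.commute)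

lemma ideal_sum: "is_ideal I \<Longrightarrow> (\<And>i. i \<in> S \<Longrightarrow> f i \<in> I) \<Longrightarrow> sum f S \<in> I"
proof (induction S rule: infinite_finite_induct)
  case (infinite A) then show ?case by (simp add: ideal_0)
next
  case empty then show ?case by (simp add: ideal_0)
next
  case (insert x F) then show ?case by (simp add: ideal_add)
qed

lemma ideal_pow_mono: "is_ideal I \<Longrightarrow> a^n \<in> I \<Longrightarrow> n \<le> m \<Longrightarrow> a^m \<in> I"
proof -
  assume "is_ideal I" "a^n \<in> I" "n \<le> m"
  then have "a^m = a^(m-n) * a^n" by (metis le_add_diff_inverse2 power_add)
  then show ?thesis using \<open>is_ideal I\<close> \<open>a^n \<in> I\<close> ideal_mult by metis
qed

lemma ideal_pow_add:
  assumes "is_ideal I" "a^n \<in> I" "b^m \<in> I"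
  shows "(a+b)^(n+m) \<in> I"
proof -
  have "(a+b)^(n+m) = (\<Sum>k\<le>n+m. of_nat ((n+m) choose k) * a^k * b^(n+m-k))"
    by (rule binomial_ring)
  also have "\<dots> \<in> I"
  proof (rule ideal_sum[OF assms(1)])
    fix k assume "k \<in> {..n+m}"
    show "of_nat ((n+m) choose k) * a^k * b^(n+m-k) \<in> I"
    proof (cases "n \<le> k")
      case True
      then have "a^k \<in> I" using ideal_pow_mono assms by blast
      then have "(of_nat ((n+m) choose k) * b^(n+m-k)) * a^k \<in> I" using ideal_mult assms(1) by blast
      then show ?thesis by (metis mult.commute mult.assoc)
    next
      case False
      then have "b^(n+m-k) \<in> I" using ideal_pow_mono[OF assms(1) assms(3)] by simp
      then show ?thesis using ideal_mult assms(1) by blast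
    qed
  qed
  finally show ?thesis .
qed

definition nrad :: "'a::comm_ring_1 set \<Rightarrow> 'a set" where
  "nrad I = {x. \<exists>n>0. x^n \<in> I}"

lemma nrad_add: "is_ideal I \<Longrightarrow> x \<in> nrad I \<Longrightarrow> y \<in> nrad I \<Longrightarrow> x + y \<in> nrad I"
proof -
  assume "is_ideal I" "x \<in> nrad I" "y \<in> nrad I"
  then obtain n m where "n > 0" "m > 0" "x^n \<in> I" "y^m \<in> I" unfolding nrad_def by blast
  then have "(x+y)^(n+m) \<in> I" "n + m > 0" using ideal_pow_add[OF \<open>is_ideal I\<close>] by auto
  then show ?thesis unfolding nrad_def by blast
qed

lemma nrad_I: "x \<in> I \<Longrightarrow> x \<in> nrad I"
  unfolding nrad_def by (intro CollectI exI[of _ 1]) simp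

lemma nrad_0: "is_ideal I \<Longrightarrow> 0 \<in> nrad I"
  using nrad_I ideal_0 by blast

lemma nrad_sum: "is_ideal I \<Longrightarrow> (\<And>i. i \<in> S \<Longrightarrow> f i \<in> nrad I) \<Longrightarrow> sum f S \<in> nrad I"
proof (induction S rule: infinite_finite_induct)
  case (infinite A) then show ?case by (simp add: nrad_0)
next
  case empty then show ?case by (simp add: nrad_0)
next
  case (insert x F) then show ?case by (simp add: nrad_add)
qed

lemma nrad_mult: "is_ideal I \<Longrightarrow> x \<in> nrad I \<Longrightarrow> r * x \<in> nrad I"
proof -
  assume "is_ideal I" "x \<in> nrad I"
  then obtain n where "n > 0" "x^n \<in> I" unfolding nrad_def by blast
  then have "r^n * x^n \<in> I" using ideal_mult[OF \<open>is_ideal I\<close>] by blast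
  then have "(r * x)^n \<in> I" by (simp add: power_mult_distrib)
  then show ?thesis using \<open>n > 0\<close> unfolding nrad_def by blast
qed

lemma Gr_def2: "x \<in> Gr Rg I \<longleftrightarrow> (\<exists>c. hom_dec Rg x c \<and> (\<forall>g. c g \<in> nrad I))"
  by (simp add: Gr_def nrad_def)

lemma Gr_iff:
  assumes "graded_decomp Rg"
  shows "x \<in> Gr Rg I \<longleftrightarrow> (\<forall>g. gcomp Rg x g \<in> nrad I)"
proof
  assume "x \<in> Gr Rg I"
  then obtain c where "hom_dec Rg x c" "\<forall>g. c g \<in> nrad I" using Gr_def2 by blast
  moreover then have "gcomp Rg x = c" using gcomp_eq[OF assms] by blast
  ultimately show "\<forall>g. gcomp Rg x g \<in> nrad I" by simp
next
  assume "\<forall>g. gcomp Rg x g \<in> nrad I"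
  then show "x \<in> Gr Rg I" using gcomp_dec[OF assms, of x] Gr_def2 by blast
qed

lemma Gr_nrad:
  assumes "is_ideal I" "x \<in> Gr Rg I"
  shows "x \<in> nrad I"
proof -
  obtain c where c: "hom_dec Rg x c" "\<forall>g. c g \<in> nrad I" using assms(2) Gr_def2 by blast
  have "x = sum c {g. c g \<noteq> 0}" using c(1) by (rule hom_dec_sum)
  moreover have "sum c {g. c g \<noteq> 0} \<in> nrad I" by (rule nrad_sum[OF assms(1)]) (use c(2) in blast)
  ultimately show ?thesis by simp
qed

lemma hom_Gr:
  assumes "graded_decomp Rg" "is_ideal I" "y \<in> Rg g" "y \<in> nrad I"
  shows "y \<in> Gr Rg I"
proof -
  have 1: "hom_dec Rg y (\<lambda>h. if h = g then y else 0)" using hom_dec_single[OF assms(1,3)] .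
  have 2: "\<forall>h. (if h = g then y else 0) \<in> nrad I" using assms(4) nrad_0[OF assms(2)] by simp
  show ?thesis unfolding Gr_def2 using 1 2 by (intro exI[of _ "\<lambda>h. if h = g then y else 0"] conjI)
qed

lemma hset_Gr_iff:
  assumes "graded_decomp Rg" "is_ideal I" "y \<in> hset Rg"
  shows "y \<in> Gr Rg I \<longleftrightarrow> y \<in> nrad I"
proof
  assume "y \<in> Gr Rg I" then show "y \<in> nrad I" by (rule Gr_nrad[OF assms(2)])
next
  assume a: "y \<in> nrad I"
  obtain g where "y \<in> Rg g" using assms(3) unfolding hset_def by (rule UnionE) auto
  then show "y \<in> Gr Rg I" using a by (rule hom_Gr[OF assms(1,2)])
qed

lemma Gr_zero: "graded_decomp Rg \<Longrightarrow> is_ideal I \<Longrightarrow> 0 \<in> Gr Rg I"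
  unfolding Gr_def2 by (intro exI[of _ "\<lambda>h. 0"] conjI hom_dec_zero) (simp_all add: nrad_0)

lemma Gr_add:
  assumes "graded_decomp Rg" "is_ideal I" "x \<in> Gr Rg I" "y \<in> Gr Rg I"
  shows "x + y \<in> Gr Rg I"
proof -
  obtain c where c: "hom_dec Rg x c" "\<forall>g. c g \<in> nrad I" using assms(3) unfolding Gr_def2 by (elim exE conjE)
  obtain d where d: "hom_dec Rg y d" "\<forall>g. d g \<in> nrad I" using assms(4) unfolding Gr_def2 by (elim exE conjE)
  have 1: "hom_dec Rg (x + y) (\<lambda>g. c g + d g)" by (rule hom_dec_add[OF assms(1) c(1) d(1)])
  have 2: "\<forall>g. c g + d g \<in> nrad I" using c(2) d(2) nrad_add[OF assms(2)] by simp
  show ?thesis unfolding Gr_def2 using 1 2 by (intro exI[of _ "\<lambda>g. c g + d g"] conjI)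
qed

lemma Gr_sum: "graded_decomp Rg \<Longrightarrow> is_ideal I \<Longrightarrow> (\<And>i. i \<in> S \<Longrightarrow> f i \<in> Gr Rg I) \<Longrightarrow> sum f S \<in> Gr Rg I"
proof (induction S rule: infinite_finite_induct)
  case (infinite A) then show ?case by (simp add: Gr_zero)
next
  case empty then show ?case by (simp add: Gr_zero)
next
  case (insert x F) then show ?case by (simp add: Gr_add)
qed

lemma gr_ring_decomp: "graded_ring Rg \<Longrightarrow> graded_decomp Rg" by (simp add: graded_ring_def)

lemma gr_ring_mult: "graded_ring Rg \<Longrightarrow> a \<in> Rg g \<Longrightarrow> b \<in> Rg h \<Longrightarrow> a * b \<in> Rg (g + h)"
  by (simp add: graded_ring_def)

lemma sum_gcomp: "graded_decomp A \<Longrightarrow> x = sum (gcomp A x) {g. gcomp A x g \<noteq> 0}"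
  by (rule hom_dec_sum[OF gcomp_dec])

lemma gcomp_in: "graded_decomp A \<Longrightarrow> gcomp A x g \<in> A g"
  by (rule hom_dec_in[OF gcomp_dec])

lemma Gr_mult:
  assumes "graded_ring Rg" "is_ideal I" "x \<in> Gr Rg I"
  shows "r * x \<in> Gr Rg I"
proof -
  have gd: "graded_decomp Rg" using assms(1) by (rule gr_ring_decomp)
  let ?c = "gcomp Rg x" and ?d = "gcomp Rg r"
  have cx: "\<forall>g. ?c g \<in> nrad I" using Gr_iff[OF gd] assms(3) by simp
  have "r * x = r * sum ?c {g. ?c g \<noteq> 0}" using sum_gcomp[OF gd, of x] by simp
  also have "\<dots> = (\<Sum>g\<in>{g. ?c g \<noteq> 0}. sum ?d {h. ?d h \<noteq> 0} * ?c g)"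
    using sum_gcomp[OF gd, of r] by (simp add: sum_distrib_left)
  also have "\<dots> = (\<Sum>g\<in>{g. ?c g \<noteq> 0}. \<Sum>h\<in>{h. ?d h \<noteq> 0}. ?d h * ?c g)"
    by (simp add: sum_distrib_right)
  also have "\<dots> \<in> Gr Rg I"
  proof (intro Gr_sum[OF gd assms(2)])
    fix g h
    have "?d h * ?c g \<in> Rg (h + g)"
      by (rule gr_ring_mult[OF assms(1) gcomp_in[OF gd] gcomp_in[OF gd]])
    moreover have "?d h * ?c g \<in> nrad I" using nrad_mult[OF assms(2)] cx by simp
    ultimately show "?d h * ?c g \<in> Gr Rg I" by (rule hom_Gr[OF gd assms(2)])
  qed
  finally show ?thesis .
qed

lemma Gr_gr_ideal:
  assumes "graded_ring Rg" "is_ideal I"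
  shows "gr_ideal Rg (Gr Rg I)"
proof -
  have gd: "graded_decomp Rg" using assms(1) by (rule gr_ring_decomp)
  have "is_ideal (Gr Rg I)" unfolding is_ideal_def
    using Gr_zero[OF gd assms(2)] Gr_add[OF gd assms(2)] Gr_mult[OF assms] by simp
  moreover have "graded_subset Rg (Gr Rg I)" unfolding graded_subset_def
  proof
    fix x assume "x \<in> Gr Rg I"
    then obtain c where c: "hom_dec Rg x c" "\<forall>g. c g \<in> nrad I" unfolding Gr_def2 by (elim exE conjE)
    have "c g \<in> Gr Rg I" for g using hom_dec_in[OF c(1)] c(2) by (intro hom_Gr[OF gd assms(2)]) auto
    then show "\<exists>c. hom_dec Rg x c \<and> (\<forall>g. c g \<in> Gr Rg I)" using c(1) by (intro exI[of _ c]) simp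
  qed
  ultimately show ?thesis by (simp add: gr_ideal_def)
qed

lemma graded_sub_Gr: "graded_subset Rg I \<Longrightarrow> I \<subseteq> Gr Rg I"
proof
  fix x assume "graded_subset Rg I" "x \<in> I"
  then obtain c where c: "hom_dec Rg x c" "\<forall>g. c g \<in> I" unfolding graded_subset_def by (elim ballE exE conjE) auto
  then have "\<forall>g. c g \<in> nrad I" by (simp add: nrad_I)
  then show "x \<in> Gr Rg I" unfolding Gr_def2 using c(1) by (intro exI[of _ c]) simp
qed

lemma Gr_mono: "I \<subseteq> J \<Longrightarrow> Gr Rg I \<subseteq> Gr Rg J"
  unfolding Gr_def by blast

lemma hom_pow:
  assumes "graded_ring Rg" "y \<in> Rg g"
  shows "\<exists>d. y^(Suc n) \<in> Rg d"
proof (induction n)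
  case 0 then show ?case using assms(2) by auto
next
  case (Suc n)
  then obtain d where "y^(Suc n) \<in> Rg d" by blast
  then have "y * y^(Suc n) \<in> Rg (g + d)" by (rule gr_ring_mult[OF assms(1) assms(2)])
  then show ?case by (intro exI[of _ "g + d"]) simp
qed

lemma hset_pow: "graded_ring Rg \<Longrightarrow> y \<in> hset Rg \<Longrightarrow> n > 0 \<Longrightarrow> y^n \<in> hset Rg"
  unfolding hset_iff using hom_pow by (metis gr0_conv_Suc)

lemma hset_mult: "graded_ring Rg \<Longrightarrow> a \<in> hset Rg \<Longrightarrow> b \<in> hset Rg \<Longrightarrow> a * b \<in> hset Rg"
  unfolding hset_iff using gr_ring_mult by metis

lemma prime_pow:
  assumes "graded_ring Rg" "gr_prime_ideal Rg p" "a \<in> hset Rg"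
  shows "a^(Suc n) \<in> p \<Longrightarrow> a \<in> p"
proof (induction n)
  case 0 then show ?case by simp
next
  case (Suc n)
  have 1: "a * a^(Suc n) \<in> p" using Suc.prems by simp
  have 2: "a^(Suc n) \<in> hset Rg" using hset_pow[OF assms(1,3), of "Suc n"] by simp
  have "\<forall>a\<in>hset Rg. \<forall>b\<in>hset Rg. a * b \<in> p \<longrightarrow> a \<in> p \<or> b \<in> p" using assms(2) by (simp add: gr_prime_ideal_def)
  then have "a \<in> p \<or> a^(Suc n) \<in> p" using 1 2 assms(3) by simp
  then show ?case using Suc.IH by auto
qed

lemma prime_nrad:
  assumes "graded_ring Rg" "gr_prime_ideal Rg p" "a \<in> hset Rg" "a \<in> nrad p"
  shows "a \<in> p"
proof -
  obtain n where "n > 0" "a^n \<in> p" using assms(4) unfolding nrad_def by auto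
  then obtain m where "a^(Suc m) \<in> p" by (metis gr0_conv_Suc)
  then show ?thesis by (rule prime_pow[OF assms(1-3)])
qed

lemma prime_Gr:
  assumes "graded_ring Rg" "gr_prime_ideal Rg p"
  shows "Gr Rg p = p"
proof
  have id: "is_ideal p" "graded_subset Rg p" using assms(2) by (auto simp: gr_prime_ideal_def gr_ideal_def)
  show "p \<subseteq> Gr Rg p" using graded_sub_Gr[OF id(2)] .
  show "Gr Rg p \<subseteq> p"
  proof
    fix x assume "x \<in> Gr Rg p"
    then obtain c where c: "hom_dec Rg x c" "\<forall>g. c g \<in> nrad p" unfolding Gr_def2 by (elim exE conjE)
    have "c g \<in> hset Rg" for g using hom_dec_in[OF c(1)] unfolding hset_iff by blast
    then have "c g \<in> p" for g using prime_nrad[OF assms] c(2) by simp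
    then have "sum c {g. c g \<noteq> 0} \<in> p" by (rule ideal_sum[OF id(1)])
    then show "x \<in> p" using hom_dec_sum[OF c(1)] by simp
  qed
qed



lemma gm_ring: "graded_module Rg Mg scale \<Longrightarrow> graded_ring Rg" by (simp add: graded_module_def)
lemma gm_decR: "graded_module Rg Mg scale \<Longrightarrow> graded_decomp Rg" by (simp add: graded_module_def graded_ring_def)
lemma gm_mod: "graded_module Rg Mg scale \<Longrightarrow> module scale" by (simp add: graded_module_def)
lemma gm_decM: "graded_module Rg Mg scale \<Longrightarrow> graded_decomp Mg" by (simp add: graded_module_def)
lemma gm_scale: "graded_module Rg Mg scale \<Longrightarrow> r \<in> Rg g \<Longrightarrow> m \<in> Mg h \<Longrightarrow> scale r m \<in> Mg (g + h)"
  by (simp add: graded_module_def)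

lemma colon_ideal:
  assumes "module scale" "module.subspace scale Q"
  shows "is_ideal (colon scale Q)"
  unfolding is_ideal_def colon_def
proof (intro conjI ballI allI CollectI)
  show "scale 0 m \<in> Q" for m using module.scale_zero_left[OF assms(1)] module.subspace_0[OF assms] by simp
  show "scale (x + y) m \<in> Q" if "x \<in> {r. \<forall>m. scale r m \<in> Q}" "y \<in> {r. \<forall>m. scale r m \<in> Q}" for x y m
    using that module.scale_left_distrib[OF assms(1)] module.subspace_add[OF assms] by simp
  show "scale (r * x) m \<in> Q" if "x \<in> {r. \<forall>m. scale r m \<in> Q}" for r x m
    using that module.scale_scale[OF assms(1), symmetric] module.subspace_scale[OF assms] by simp
qed

lemma gr_sub_subspace: "gr_submodule Mg scale N \<Longrightarrow> module.subspace scale N"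
  by (simp add: gr_submodule_def)
lemma gr_sub_graded: "gr_submodule Mg scale N \<Longrightarrow> graded_subset Mg N"
  by (simp add: gr_submodule_def)

lemma colon_graded:
  assumes gm: "graded_module Rg Mg scale" and N: "gr_submodule Mg scale N" and x: "x \<in> colon scale N"
  shows "gcomp Rg x g \<in> colon scale N"
proof -
  have gdR: "graded_decomp Rg" using gm by (rule gm_decR)
  have gdM: "graded_decomp Mg" using gm by (rule gm_decM)
  have md: "module scale" using gm by (rule gm_mod)
  have sub: "module.subspace scale N" using N by (rule gr_sub_subspace)
  let ?c = "gcomp Rg x" let ?S = "{g. ?c g \<noteq> 0}"
  have fin: "finite ?S" by (rule hom_dec_fin[OF gcomp_dec[OF gdR]])
  have step1: "scale (?c g) mh \<in> N" if mh: "mh \<in> Mg h" for mh h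
  proof -
    define f where "f g = scale (?c g) mh" for g
    have "scale x mh = scale (sum ?c ?S) mh" using sum_gcomp[OF gdR, of x] by simp
    also have "\<dots> = sum f ?S" unfolding f_def by (rule module.scale_sum_left[OF md])
    finally have eq: "scale x mh = sum f ?S" .
    have dec: "hom_dec Mg (sum f ?S) (\<lambda>k. f (k - h))"
    proof (rule hom_dec_shift[where t="\<lambda>g. g + h"])
      show "k - h + h = k" for k by simp
      show "g + h - h = g" for g by simp
      show "finite ?S" by (rule fin)
      show "f g = 0" if "g \<notin> ?S" for g using that module.scale_zero_left[OF md] unfolding f_def by simp
      show "f g \<in> Mg (g + h)" for g unfolding f_def by (rule gm_scale[OF gm gcomp_in[OF gdR] mh])
    qed
    have "scale x mh \<in> N" using x unfolding colon_def by simp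
    then have "sum f ?S \<in> N" using eq by simp
    from graded_subset_dec[OF gdM gr_sub_graded[OF N] this dec, of "g + h"]
    show ?thesis unfolding f_def by simp
  qed
  show ?thesis unfolding colon_def
  proof (intro CollectI allI)
    fix m
    have "scale (?c g) m = scale (?c g) (sum (gcomp Mg m) {h. gcomp Mg m h \<noteq> 0})"
      using sum_gcomp[OF gdM, of m] by simp
    also have "\<dots> = (\<Sum>h\<in>{h. gcomp Mg m h \<noteq> 0}. scale (?c g) (gcomp Mg m h))"
      by (rule module.scale_sum_right[OF md])
    also have "\<dots> \<in> N"
      by (rule module.subspace_sum[OF md sub]) (rule step1[OF gcomp_in[OF gdM]])
    finally show "scale (?c g) m \<in> N" .
  qed
qed

lemma colon_graded_subset:
  assumes "graded_module Rg Mg scale" "gr_submodule Mg scale N"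
  shows "graded_subset Rg (colon scale N)"
  unfolding graded_subset_def
proof
  fix x assume "x \<in> colon scale N"
  then have "\<forall>g. gcomp Rg x g \<in> colon scale N" using colon_graded[OF assms] by simp
  then show "\<exists>c. hom_dec Rg x c \<and> (\<forall>g. c g \<in> colon scale N)"
    using gcomp_dec[OF gm_decR[OF assms(1)], of x] by (intro exI[of _ "gcomp Rg x"]) simp
qed

lemma colon_sub_Gr:
  assumes "graded_module Rg Mg scale" "gr_submodule Mg scale N"
  shows "colon scale N \<subseteq> Gr Rg (colon scale N)"
  by (rule graded_sub_Gr[OF colon_graded_subset[OF assms]])

lemma range_scale_gr:
  assumes gm: "graded_module Rg Mg scale" and a: "a \<in> Rg g0"
  shows "gr_submodule Mg scale (range (scale a))"
proof -
  have gdM: "graded_decomp Mg" using gm by (rule gm_decM)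
  have md: "module scale" using gm by (rule gm_mod)
  have "module.subspace scale (range (scale a))"
    unfolding module.subspace_def[OF md]
  proof (intro conjI ballI allI)
    show "0 \<in> range (scale a)" using module.scale_zero_right[OF md, of a] by (metis rangeI)
    show "x + y \<in> range (scale a)" if hxy: "x \<in> range (scale a)" "y \<in> range (scale a)" for x y
    proof -
      obtain u v where "x = scale a u" "y = scale a v" using hxy by blast
      then have "x + y = scale a (u + v)" using module.scale_right_distrib[OF md, of a u v] by simp
      then show ?thesis by simp
    qed
    show "scale c x \<in> range (scale a)" if hx: "x \<in> range (scale a)" for c x
    proof -
      obtain u where "x = scale a u" using hx by blast
      then have "scale c x = scale a (scale c u)" using module.scale_left_commute[OF md, of c a u] by simp
      then show ?thesis by simp
    qed
  qed
  moreover have "graded_subset Mg (range (scale a))"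
    unfolding graded_subset_def
  proof
    fix x assume "x \<in> range (scale a)"
    then obtain m where xm: "x = scale a m" by blast
    let ?c = "gcomp Mg m" let ?S = "{h. ?c h \<noteq> 0}"
    define f where "f h = scale a (?c h)" for h
    have "x = scale a (sum ?c ?S)" using xm sum_gcomp[OF gdM, of m] by simp
    also have "\<dots> = sum f ?S" unfolding f_def by (rule module.scale_sum_right[OF md])
    finally have eq: "x = sum f ?S" .
    have dec: "hom_dec Mg (sum f ?S) (\<lambda>k. f (- g0 + k))"
    proof (rule hom_dec_shift[where t="\<lambda>h. g0 + h"])
      show "g0 + (- g0 + k) = k" for k by (simp add: add.assoc[symmetric])
      show "- g0 + (g0 + h) = h" for h by (simp add: add.assoc[symmetric])
      show "finite ?S" by (rule hom_dec_fin[OF gcomp_dec[OF gdM]])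
      show "f h = 0" if "h \<notin> ?S" for h using that module.scale_zero_right[OF md] unfolding f_def by simp
      show "f h \<in> Mg (g0 + h)" for h unfolding f_def by (rule gm_scale[OF gm a gcomp_in[OF gdM]])
    qed
    show "\<exists>c. hom_dec Mg x c \<and> (\<forall>g. c g \<in> range (scale a))"
      using dec eq unfolding f_def by (intro exI[of _ "\<lambda>k. f (- g0 + k)"]) (simp add: f_def)
  qed
  ultimately show ?thesis by (simp add: gr_submodule_def)
qed



definition addI :: "'a::comm_ring_1 set \<Rightarrow> 'a \<Rightarrow> 'a set" where
  "addI P a = {p + r * a | p r. p \<in> P}"

lemma gr_ideal_ideal: "gr_ideal Rg I \<Longrightarrow> is_ideal I" by (simp add: gr_ideal_def)
lemma gr_ideal_graded: "gr_ideal Rg I \<Longrightarrow> graded_subset Rg I" by (simp add: gr_ideal_def)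

lemma addI_sup: "is_ideal P \<Longrightarrow> P \<subseteq> addI P a"
proof
  fix x assume "x \<in> P"
  then have "x = x + 0 * a \<and> x \<in> P" by simp
  then show "x \<in> addI P a" unfolding addI_def by blast
qed

lemma addI_a: "is_ideal P \<Longrightarrow> a \<in> addI P a"
proof -
  assume "is_ideal P"
  then have "a = 0 + 1 * a \<and> 0 \<in> P" by (simp add: ideal_0)
  then show "a \<in> addI P a" unfolding addI_def by blast
qed

lemma addI_gr_ideal:
  assumes gr: "graded_ring Rg" and P: "gr_ideal Rg P" and a: "a \<in> Rg g0"
  shows "gr_ideal Rg (addI P a)"
proof -
  have gd: "graded_decomp Rg" using gr by (rule gr_ring_decomp)
  have iP: "is_ideal P" using P by (rule gr_ideal_ideal)
  have "is_ideal (addI P a)" unfolding is_ideal_def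
  proof (intro conjI ballI allI)
    show "0 \<in> addI P a" using addI_sup[OF iP] ideal_0[OF iP] by blast
    show "x + y \<in> addI P a" if hxy: "x \<in> addI P a" "y \<in> addI P a" for x y
    proof -
      obtain p1 r1 p2 r2 where "x = p1 + r1 * a" "y = p2 + r2 * a" "p1 \<in> P" "p2 \<in> P"
        using hxy unfolding addI_def by blast
      then have "x + y = (p1 + p2) + (r1 + r2) * a" "p1 + p2 \<in> P"
        using ideal_add[OF iP] by (auto simp: algebra_simps)
      then show ?thesis unfolding addI_def by blast
    qed
    show "r * x \<in> addI P a" if hx: "x \<in> addI P a" for r x
    proof -
      obtain p1 r1 where "x = p1 + r1 * a" "p1 \<in> P"
        using hx unfolding addI_def by blast
      then have "r * x = r * p1 + (r * r1) * a" "r * p1 \<in> P"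
        using ideal_mult[OF iP] by (auto simp: algebra_simps)
      then show ?thesis unfolding addI_def by blast
    qed
  qed
  moreover have "graded_subset Rg (addI P a)" unfolding graded_subset_def
  proof
    fix y assume "y \<in> addI P a"
    then obtain p r where y: "y = p + r * a" "p \<in> P" unfolding addI_def by blast
    let ?c = "gcomp Rg r" let ?S = "{h. ?c h \<noteq> 0}"
    define f where "f h = ?c h * a" for h
    have "r * a = sum ?c ?S * a" using sum_gcomp[OF gd, of r] by simp
    also have "\<dots> = sum f ?S" unfolding f_def by (rule sum_distrib_right)
    finally have eq: "r * a = sum f ?S" .
    have dec: "hom_dec Rg (sum f ?S) (\<lambda>k. f (k - g0))"
    proof (rule hom_dec_shift[where t="\<lambda>h. h + g0"])
      show "k - g0 + g0 = k" for k by simp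
      show "h + g0 - g0 = h" for h by simp
      show "finite ?S" by (rule hom_dec_fin[OF gcomp_dec[OF gd]])
      show "f h = 0" if "h \<notin> ?S" for h using that unfolding f_def by simp
      show "f h \<in> Rg (h + g0)" for h unfolding f_def by (rule gr_ring_mult[OF gr gcomp_in[OF gd] a])
    qed
    have dp: "hom_dec Rg p (gcomp Rg p)" by (rule gcomp_dec[OF gd])
    have dy: "hom_dec Rg y (\<lambda>k. gcomp Rg p k + f (k - g0))"
      using hom_dec_add[OF gd dp dec] eq y(1) by simp
    have "gcomp Rg p k \<in> P" for k by (rule graded_subset_dec[OF gd gr_ideal_graded[OF P] y(2) dp])
    then have "gcomp Rg p k + f (k - g0) \<in> addI P a" for k unfolding addI_def f_def by blast
    then show "\<exists>c. hom_dec Rg y c \<and> (\<forall>g. c g \<in> addI P a)"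
      using dy by (intro exI[of _ "\<lambda>k. gcomp Rg p k + f (k - g0)"]) simp
  qed
  ultimately show ?thesis by (simp add: gr_ideal_def)
qed

lemma prime_avoid:
  assumes gr: "graded_ring Rg" and I: "gr_ideal Rg I" and nx: "\<forall>n. x^n \<notin> I"
  shows "\<exists>p. gr_prime_ideal Rg p \<and> I \<subseteq> p \<and> x \<notin> p"
proof -
  define S where "S = {P. gr_ideal Rg P \<and> I \<subseteq> P \<and> (\<forall>n. x^n \<notin> P)}"
  have IS: "I \<in> S" using I nx unfolding S_def by blast
  have "\<exists>U\<in>S. \<forall>X\<in>C. X \<subseteq> U" if C: "C \<in> chains S" for C
  proof (cases "C = {}")
    case True then show ?thesis using IS by blast
  next
    case False
    have CS: "C \<subseteq> S" using C by (rule chainsD2)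
    have ch: "P1 \<subseteq> P2 \<or> P2 \<subseteq> P1" if "P1 \<in> C" "P2 \<in> C" for P1 P2 using chainsD[OF C that] .
    have mem: "gr_ideal Rg P" "I \<subseteq> P" "\<forall>n. x^n \<notin> P" if "P \<in> C" for P using that CS unfolding S_def by auto
    obtain P0 where P0: "P0 \<in> C" using False by blast
    have "is_ideal (\<Union>C)" unfolding is_ideal_def
    proof (intro conjI ballI allI)
      show "0 \<in> \<Union>C" using P0 ideal_0[OF gr_ideal_ideal[OF mem(1)[OF P0]]] by blast
      show "u + v \<in> \<Union>C" if huv: "u \<in> \<Union>C" "v \<in> \<Union>C" for u v
      proof -
        obtain P1 P2 where "P1 \<in> C" "P2 \<in> C" "u \<in> P1" "v \<in> P2" using huv by blast
        then show ?thesis using ch[of P1 P2] ideal_add[OF gr_ideal_ideal[OF mem(1)]] by blast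
      qed
      show "r * u \<in> \<Union>C" if "u \<in> \<Union>C" for r u
        using that ideal_mult[OF gr_ideal_ideal[OF mem(1)]] by blast
    qed
    moreover have "graded_subset Rg (\<Union>C)" unfolding graded_subset_def
    proof
      fix u assume "u \<in> \<Union>C"
      then obtain P where "P \<in> C" "u \<in> P" by blast
      then obtain c where "hom_dec Rg u c" "\<forall>g. c g \<in> P"
        using gr_ideal_graded[OF mem(1)] unfolding graded_subset_def by blast
      then show "\<exists>c. hom_dec Rg u c \<and> (\<forall>g. c g \<in> \<Union>C)" using \<open>P \<in> C\<close> by blast
    qed
    ultimately have "\<Union>C \<in> S" unfolding S_def gr_ideal_def using mem P0 by blast
    then show ?thesis by blast
  qed
  then obtain P where P: "P \<in> S" and max: "\<forall>X\<in>S. P \<subseteq> X \<longrightarrow> X = P"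
    using Zorn_Lemma2[of S] by blast
  have gP: "gr_ideal Rg P" and IP: "I \<subseteq> P" and xP: "\<forall>n. x^n \<notin> P" using P unfolding S_def by auto
  have iP: "is_ideal P" using gP by (rule gr_ideal_ideal)
  have ext: "\<exists>n. x^n \<in> addI P a" if ha: "a \<in> hset Rg" "a \<notin> P" for a
  proof (rule ccontr)
    assume "\<not> (\<exists>n. x^n \<in> addI P a)"
    moreover obtain g0 where "a \<in> Rg g0" using ha(1) unfolding hset_iff by blast
    ultimately have "addI P a \<in> S" unfolding S_def using addI_gr_ideal[OF gr gP] IP addI_sup[OF iP] by blast
    then have "addI P a = P" using max addI_sup[OF iP] by blast
    then show False using addI_a[OF iP, of a] ha(2) by simp
  qed
  have "gr_prime_ideal Rg P" unfolding gr_prime_ideal_def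
  proof (intro conjI ballI impI)
    show "gr_ideal Rg P" by (rule gP)
    show "P \<noteq> UNIV" using xP by blast
    fix a b assume ab: "a \<in> hset Rg" "b \<in> hset Rg" "a * b \<in> P"
    show "a \<in> P \<or> b \<in> P"
    proof (rule ccontr)
      assume "\<not> (a \<in> P \<or> b \<in> P)"
      then obtain n m where "x^n \<in> addI P a" "x^m \<in> addI P b" using ext ab by blast
      then obtain p1 r1 p2 r2 where e: "x^n = p1 + r1 * a" "x^m = p2 + r2 * b" "p1 \<in> P" "p2 \<in> P"
        unfolding addI_def by blast
      have "x^(n+m) = x^n * x^m" by (simp add: power_add)
      also have "\<dots> = p1 * (p2 + r2 * b) + p2 * (r1 * a) + (r1 * r2) * (a * b)"
        using e by (simp add: algebra_simps)
      also have "\<dots> \<in> P"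
      proof -
        have 1: "p1 * (p2 + r2 * b) \<in> P" by (rule ideal_mult2[OF iP e(3)])
        have 2: "p2 * (r1 * a) \<in> P" by (rule ideal_mult2[OF iP e(4)])
        have 3: "(r1 * r2) * (a * b) \<in> P" by (rule ideal_mult[OF iP ab(3)])
        show ?thesis by (rule ideal_add[OF iP ideal_add[OF iP 1 2] 3])
      qed
      finally show False using xP by blast
    qed
  qed
  moreover have "x \<notin> P" using xP power_one_right by metis
  ultimately show ?thesis using IP by blast
qed



lemma qpSpecD:
  assumes "Q \<in> qpSpec Rg Mg scale"
  shows "gr_submodule Mg scale Q" "Q \<noteq> UNIV"
    "\<And>r m. r \<in> hset Rg \<Longrightarrow> m \<in> hset Mg \<Longrightarrow> scale r m \<in> Q \<Longrightarrow>
        r \<in> Gr Rg (colon scale Q) \<or> m \<in> GrM Rg Mg scale Q"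
    "primeful Rg Mg scale Q"
  using assms unfolding qpSpec_def gr_qp_sub_def by auto

lemma colon_gr_ideal:
  assumes "graded_module Rg Mg scale" "gr_submodule Mg scale N"
  shows "gr_ideal Rg (colon scale N)"
  unfolding gr_ideal_def
  using colon_ideal[OF gm_mod[OF assms(1)] gr_sub_subspace[OF assms(2)]] colon_graded_subset[OF assms] by simp

lemma one_notin_colon:
  assumes "module scale" "Q \<noteq> UNIV"
  shows "1 \<notin> colon scale Q"
proof
  assume "1 \<in> colon scale Q"
  then have "scale 1 m \<in> Q" for m unfolding colon_def by simp
  then have "m \<in> Q" for m using module.scale_one[OF assms(1)] by metis
  then show False using assms(2) by blast
qed

lemma pow_Gr:
  assumes "graded_ring Rg" "is_ideal I" "a \<in> hset Rg" "n > 0" "a^n \<in> Gr Rg I"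
  shows "a \<in> Gr Rg I"
proof -
  have "a^n \<in> nrad I" using Gr_nrad[OF assms(2,5)] .
  then obtain k where "k > 0" "(a^n)^k \<in> I" unfolding nrad_def by blast
  then have "a^(n*k) \<in> I" "n * k > 0" using assms(4) by (auto simp: power_mult)
  then have "a \<in> nrad I" unfolding nrad_def by blast
  then show ?thesis using hset_Gr_iff[OF gr_ring_decomp[OF assms(1)] assms(2,3)] by simp
qed

lemma GrM_subspace:
  assumes "module scale"
  shows "module.subspace scale (GrM Rg Mg scale Q)"
  unfolding GrM_def
proof (rule module.subspace_Inter[OF assms], intro ballI)
  fix P assume "P \<in> {P. gr_prime_sub Rg Mg scale P \<and> Q \<subseteq> P}"
  then show "module.subspace scale P" by (simp add: gr_prime_sub_def gr_submodule_def)
qed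

context
  fixes Rg :: "'g::group_add \<Rightarrow> 'a::comm_ring_1 set"
    and Mg :: "'g \<Rightarrow> 'b::ab_group_add set"
    and scale :: "'a \<Rightarrow> 'b \<Rightarrow> 'b"
  assumes gm: "graded_module Rg Mg scale"
begin

lemma phi_ideal:
  assumes "Q \<in> qpSpec Rg Mg scale"
  shows "gr_ideal Rg (Gr Rg (colon scale Q))"
  by (rule Gr_gr_ideal[OF gm_ring[OF gm] colon_ideal[OF gm_mod[OF gm] gr_sub_subspace[OF qpSpecD(1)[OF assms]]]])

lemma phi_proper:
  assumes "Q \<in> qpSpec Rg Mg scale"
  shows "1 \<notin> Gr Rg (colon scale Q)"
proof
  have iI: "is_ideal (colon scale Q)"
    by (rule colon_ideal[OF gm_mod[OF gm] gr_sub_subspace[OF qpSpecD(1)[OF assms]]])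
  assume "1 \<in> Gr Rg (colon scale Q)"
  then have "(1::'a) \<in> nrad (colon scale Q)" by (rule Gr_nrad[OF iI])
  then have "1 \<in> colon scale Q" unfolding nrad_def by simp
  then show False using one_notin_colon[OF gm_mod[OF gm] qpSpecD(2)[OF assms]] by simp
qed

lemma Ann_sub_phi:
  assumes "Q \<in> qpSpec Rg Mg scale"
  shows "Ann scale \<subseteq> Gr Rg (colon scale Q)"
proof -
  have "Ann scale \<subseteq> colon scale Q"
    unfolding Ann_def colon_def
    using module.subspace_0[OF gm_mod[OF gm] gr_sub_subspace[OF qpSpecD(1)[OF assms]]] by auto
  also have "\<dots> \<subseteq> Gr Rg (colon scale Q)" by (rule colon_sub_Gr[OF gm qpSpecD(1)[OF assms]])
  finally show ?thesis .
qed

lemma colon_GrM_in_phi: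
  assumes Q: "Q \<in> qpSpec Rg Mg scale" and b: "b \<in> hset Rg" and bc: "b \<in> colon scale (GrM Rg Mg scale Q)"
  shows "b \<in> Gr Rg (colon scale Q)"
proof (rule ccontr)
  assume nb: "b \<notin> Gr Rg (colon scale Q)"
  have gr: "graded_ring Rg" using gm by (rule gm_ring)
  have gI: "gr_ideal Rg (colon scale Q)" by (rule colon_gr_ideal[OF gm qpSpecD(1)[OF Q]])
  have iI: "is_ideal (colon scale Q)" using gI by (rule gr_ideal_ideal)
  have "b^n \<notin> colon scale Q" for n
  proof (cases n)
    case 0 then show ?thesis using one_notin_colon[OF gm_mod[OF gm] qpSpecD(2)[OF Q]] by simp
  next
    case (Suc k)
    show ?thesis
    proof
      assume "b^n \<in> colon scale Q"
      then have "b \<in> nrad (colon scale Q)" unfolding nrad_def using Suc by blast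
      then show False using nb hset_Gr_iff[OF gr_ring_decomp[OF gr] iI b] by simp
    qed
  qed
  then obtain p where p: "gr_prime_ideal Rg p" "colon scale Q \<subseteq> p" "b \<notin> p"
    using prime_avoid[OF gr gI] by blast
  obtain P where P: "gr_prime_sub Rg Mg scale P" "Q \<subseteq> P" "colon scale P = p"
    using qpSpecD(4)[OF Q] p(1,2) unfolding primeful_def by blast
  have "GrM Rg Mg scale Q \<subseteq> P" unfolding GrM_def using P(1,2) by blast
  then have "b \<in> colon scale P" using bc unfolding colon_def by blast
  then show False using P(3) p(3) by simp
qed

lemma phi_prime:
  assumes Q: "Q \<in> qpSpec Rg Mg scale"
  shows "gr_prime_ideal Rg (Gr Rg (colon scale Q))"
proof -
  have gr: "graded_ring Rg" using gm by (rule gm_ring)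
  have md: "module scale" using gm by (rule gm_mod)
  have gdM: "graded_decomp Mg" using gm by (rule gm_decM)
  have iI: "is_ideal (colon scale Q)"
    by (rule colon_ideal[OF md gr_sub_subspace[OF qpSpecD(1)[OF Q]]])
  let ?phi = "Gr Rg (colon scale Q)"
  show ?thesis unfolding gr_prime_ideal_def
  proof (intro conjI ballI impI)
    show "gr_ideal Rg ?phi" by (rule phi_ideal[OF Q])
    show "?phi \<noteq> UNIV" using phi_proper[OF Q] by blast
    fix a b assume a: "a \<in> hset Rg" and b: "b \<in> hset Rg" and ab: "a * b \<in> ?phi"
    show "a \<in> ?phi \<or> b \<in> ?phi"
    proof (cases "a \<in> ?phi")
      case True then show ?thesis by simp
    next
      case False
      note na = False
      have "a * b \<in> nrad (colon scale Q)" by (rule Gr_nrad[OF iI ab])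
      then obtain n where n: "n > 0" "(a * b)^n \<in> colon scale Q" unfolding nrad_def by blast
      have an: "a^n \<in> hset Rg" "b^n \<in> hset Rg" using hset_pow[OF gr a n(1)] hset_pow[OF gr b n(1)] by auto
      have nan: "a^n \<notin> ?phi" using pow_Gr[OF gr iI a n(1)] na by blast
      have hom: "scale (b^n) m \<in> GrM Rg Mg scale Q" if m: "m \<in> hset Mg" for m
      proof -
        have "scale (a^n) (scale (b^n) m) = scale ((a*b)^n) m"
          using module.scale_scale[OF md] by (simp add: power_mult_distrib)
        also have "\<dots> \<in> Q" using n(2) unfolding colon_def by simp
        finally have "scale (a^n) (scale (b^n) m) \<in> Q" .
        moreover have "scale (b^n) m \<in> hset Mg"
          using an(2) m gm_scale[OF gm] unfolding hset_iff by blast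
        ultimately show ?thesis using qpSpecD(3)[OF Q an(1)] nan by blast
      qed
      have "b^n \<in> colon scale (GrM Rg Mg scale Q)" unfolding colon_def
      proof (intro CollectI allI)
        fix m
        have "scale (b^n) m = scale (b^n) (sum (gcomp Mg m) {h. gcomp Mg m h \<noteq> 0})"
          using sum_gcomp[OF gdM, of m] by simp
        also have "\<dots> = (\<Sum>h\<in>{h. gcomp Mg m h \<noteq> 0}. scale (b^n) (gcomp Mg m h))"
          by (rule module.scale_sum_right[OF md])
        also have "\<dots> \<in> GrM Rg Mg scale Q"
        proof (rule module.subspace_sum[OF md GrM_subspace[OF md]])
          fix h show "scale (b^n) (gcomp Mg m h) \<in> GrM Rg Mg scale Q"
            using hom gcomp_in[OF gdM] unfolding hset_iff by blast
        qed
        finally show "scale (b^n) m \<in> GrM Rg Mg scale Q" .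
      qed
      then have "b^n \<in> ?phi" by (rule colon_GrM_in_phi[OF Q an(2)])
      then have "b \<in> ?phi" by (rule pow_Gr[OF gr iI b n(1)])
      then show ?thesis by simp
    qed
  qed
qed

end



lemma ideal_one_notin: "is_ideal P \<Longrightarrow> P \<noteq> UNIV \<Longrightarrow> 1 \<notin> P"
proof
  assume h: "is_ideal P" "P \<noteq> UNIV" "1 \<in> P"
  have "r * 1 \<in> P" for r by (rule ideal_mult[OF h(1) h(3)])
  then show False using \<open>P \<noteq> UNIV\<close> by auto
qed

lemma chain_Inter_prime:
  assumes gr: "graded_ring Rg" and ne: "D \<noteq> {}" and DV: "D \<subseteq> VR Rg I"
    and ch: "\<And>P1 P2. P1 \<in> D \<Longrightarrow> P2 \<in> D \<Longrightarrow> P1 \<subseteq> P2 \<or> P2 \<subseteq> P1"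
  shows "\<Inter>D \<in> VR Rg I"
proof -
  have gd: "graded_decomp Rg" using gr by (rule gr_ring_decomp)
  have pr: "gr_prime_ideal Rg P" "I \<subseteq> P" if "P \<in> D" for P using that DV unfolding VR_def by auto
  have iP: "is_ideal P" if "P \<in> D" for P using pr(1)[OF that] by (simp add: gr_prime_ideal_def gr_ideal_def)
  have gP: "graded_subset Rg P" if "P \<in> D" for P using pr(1)[OF that] by (simp add: gr_prime_ideal_def gr_ideal_def)
  have hp: "\<And>a b. a \<in> hset Rg \<Longrightarrow> b \<in> hset Rg \<Longrightarrow> a * b \<in> P \<Longrightarrow> a \<in> P \<or> b \<in> P" if "P \<in> D" for P
    using pr(1)[OF that] by (simp add: gr_prime_ideal_def)
  obtain P0 where P0: "P0 \<in> D" using ne by blast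
  have "is_ideal (\<Inter>D)" unfolding is_ideal_def
    using ideal_0[OF iP] ideal_add[OF iP] ideal_mult[OF iP] by blast
  moreover have "graded_subset Rg (\<Inter>D)" unfolding graded_subset_def
  proof
    fix x assume x: "x \<in> \<Inter>D"
    have "gcomp Rg x g \<in> \<Inter>D" for g
      using graded_subset_dec[OF gd gP _ gcomp_dec[OF gd]] x by blast
    then show "\<exists>c. hom_dec Rg x c \<and> (\<forall>g. c g \<in> \<Inter>D)"
      using gcomp_dec[OF gd, of x] by (intro exI[of _ "gcomp Rg x"]) simp
  qed
  moreover have "\<Inter>D \<noteq> UNIV"
    using ideal_one_notin[OF iP[OF P0]] pr(1)[OF P0] P0 unfolding gr_prime_ideal_def by blast
  moreover have "a \<in> \<Inter>D \<or> b \<in> \<Inter>D" if ab: "a \<in> hset Rg" "b \<in> hset Rg" "a * b \<in> \<Inter>D" for a b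
  proof (rule ccontr)
    assume "\<not> (a \<in> \<Inter>D \<or> b \<in> \<Inter>D)"
    then obtain P1 P2 where P: "P1 \<in> D" "P2 \<in> D" "a \<notin> P1" "b \<notin> P2" by blast
    show False
    proof (cases "P1 \<subseteq> P2")
      case True
      then have "b \<notin> P1" using P by blast
      moreover have "a * b \<in> P1" using ab(3) P(1) by blast
      ultimately show False using hp[OF P(1) ab(1,2)] P(3) by blast
    next
      case False
      then have "P2 \<subseteq> P1" using ch[OF P(1,2)] by blast
      then have "a \<notin> P2" using P by blast
      moreover have "a * b \<in> P2" using ab(3) P(2) by blast
      ultimately show False using hp[OF P(2) ab(1,2)] P(4) by blast
    qed
  qed
  moreover have "I \<subseteq> \<Inter>D" using pr(2) by blast
  ultimately show ?thesis unfolding VR_def gr_prime_ideal_def gr_ideal_def by blast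
qed

lemma minimal_prime:
  assumes gr: "graded_ring Rg" and p0: "p0 \<in> VR Rg I"
  shows "\<exists>p\<in>VR Rg I. p \<subseteq> p0 \<and> (\<forall>p'\<in>VR Rg I. p' \<subseteq> p \<longrightarrow> p' = p)"
proof -
  define F where "F = {P \<in> VR Rg I. P \<subseteq> p0}"
  define T where "T = uminus ` F"
  have "\<exists>M\<in>T. \<forall>X\<in>T. M \<subseteq> X \<longrightarrow> X = M"
  proof (rule subset_Zorn_nonempty)
    show "T \<noteq> {}" using p0 unfolding T_def F_def by blast
    fix C assume Cne: "C \<noteq> {}" and Cch: "subset.chain T C"
    have CT: "C \<subseteq> T" and ch: "\<And>X Y. X \<in> C \<Longrightarrow> Y \<in> C \<Longrightarrow> X \<subseteq> Y \<or> Y \<subseteq> X"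
      using Cch unfolding subset_chain_def by auto
    define D where "D = uminus ` C"
    have DF: "D \<subseteq> F" using CT unfolding D_def T_def by auto
    have "\<Inter>D \<in> VR Rg I"
    proof (rule chain_Inter_prime[OF gr])
      show "D \<noteq> {}" using Cne unfolding D_def by blast
      show "D \<subseteq> VR Rg I" using DF unfolding F_def by blast
      fix P1 P2 assume "P1 \<in> D" "P2 \<in> D"
      then obtain X Y where "X \<in> C" "Y \<in> C" "P1 = - X" "P2 = - Y" unfolding D_def by blast
      then show "P1 \<subseteq> P2 \<or> P2 \<subseteq> P1" using ch[of X Y] by blast
    qed
    moreover have "\<Inter>D \<subseteq> p0" using DF Cne unfolding F_def D_def by blast
    ultimately have "\<Inter>D \<in> F" unfolding F_def by blast
    moreover have "\<Union>C = - \<Inter>D" unfolding D_def by auto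
    ultimately show "\<Union>C \<in> T" unfolding T_def by blast
  qed
  then obtain M where M: "M \<in> T" "\<forall>X\<in>T. M \<subseteq> X \<longrightarrow> X = M" by blast
  then obtain P where P: "P \<in> F" "M = - P" unfolding T_def by blast
  have "\<forall>p'\<in>VR Rg I. p' \<subseteq> P \<longrightarrow> p' = P"
  proof (intro ballI impI)
    fix p' assume "p' \<in> VR Rg I" "p' \<subseteq> P"
    then have "p' \<in> F" using P(1) unfolding F_def by blast
    then have "- p' \<in> T" unfolding T_def by blast
    moreover have "M \<subseteq> - p'" using P(2) \<open>p' \<subseteq> P\<close> by blast
    ultimately have "- p' = - P" using M(2) P(2) by blast
    then show "p' = P" by simp
  qed
  then show ?thesis using P(1) unfolding F_def by blast
qed



context
  fixes Rg :: "'g::group_add \<Rightarrow> 'a::comm_ring_1 set"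
    and Mg :: "'g \<Rightarrow> 'b::ab_group_add set"
    and scale :: "'a \<Rightarrow> 'b \<Rightarrow> 'b"
  assumes gm: "graded_module Rg Mg scale"
begin

lemma Va_iff:
  assumes a: "a \<in> hset Rg" and Q: "Q \<in> qpSpec Rg Mg scale"
  shows "Gr Rg (colon scale (range (scale a))) \<subseteq> Gr Rg (colon scale Q) \<longleftrightarrow> a \<in> Gr Rg (colon scale Q)"
proof -
  have gr: "graded_ring Rg" using gm by (rule gm_ring)
  have gd: "graded_decomp Rg" using gm by (rule gm_decR)
  have md: "module scale" using gm by (rule gm_mod)
  obtain g0 where g0: "a \<in> Rg g0" using a unfolding hset_iff by blast
  have K: "gr_submodule Mg scale (range (scale a))" by (rule range_scale_gr[OF gm g0])
  have iI: "is_ideal (colon scale Q)"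
    by (rule colon_ideal[OF md gr_sub_subspace[OF qpSpecD(1)[OF Q]]])
  let ?phi = "Gr Rg (colon scale Q)"
  have aK: "a \<in> colon scale (range (scale a))" unfolding colon_def by simp
  show ?thesis
  proof
    assume "Gr Rg (colon scale (range (scale a))) \<subseteq> ?phi"
    then show "a \<in> ?phi" using colon_sub_Gr[OF gm K] aK by blast
  next
    assume "a \<in> ?phi"
    then obtain n where n: "n > 0" "a^n \<in> colon scale Q" using Gr_nrad[OF iI] unfolding nrad_def by blast
    have "colon scale (range (scale a)) \<subseteq> ?phi"
    proof
      fix r assume r: "r \<in> colon scale (range (scale a))"
      have "gcomp Rg r g \<in> ?phi" for g
      proof -
        let ?s = "gcomp Rg r g"
        have s: "?s \<in> colon scale (range (scale a))" by (rule colon_graded[OF gm K r])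
        have pw: "\<forall>m. \<exists>m'. scale (?s^k) m = scale (a^k) m'" for k
        proof (induction k)
          case 0 then show ?case using module.scale_one[OF md] by simp
        next
          case (Suc k)
          show ?case
          proof
            fix m
            obtain u where u: "scale ?s m = scale a u" using s unfolding colon_def by blast
            obtain m' where m': "scale (?s^k) u = scale (a^k) m'" using Suc by blast
            have "scale (?s^(Suc k)) m = scale (?s^k) (scale ?s m)"
              using module.scale_scale[OF md] by (simp add: mult.commute)
            also have "\<dots> = scale (?s^k) (scale a u)" using u by simp
            also have "\<dots> = scale a (scale (?s^k) u)" using module.scale_left_commute[OF md] by simp
            also have "\<dots> = scale a (scale (a^k) m')" using m' by simp
            also have "\<dots> = scale (a^(Suc k)) m'" using module.scale_scale[OF md] by simp
            finally show "\<exists>m'. scale (?s^(Suc k)) m = scale (a^(Suc k)) m'" by blast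
          qed
        qed
        have "?s^n \<in> colon scale Q" unfolding colon_def
        proof (intro CollectI allI)
          fix m obtain m' where "scale (?s^n) m = scale (a^n) m'" using pw by blast
          then show "scale (?s^n) m \<in> Q" using n(2) unfolding colon_def by simp
        qed
        then have "?s \<in> nrad (colon scale Q)" unfolding nrad_def using n(1) by blast
        then show ?thesis by (rule hom_Gr[OF gd iI gcomp_in[OF gd]])
      qed
      then have "sum (gcomp Rg r) {g. gcomp Rg r g \<noteq> 0} \<in> ?phi"
        by (intro ideal_sum[OF gr_ideal_ideal[OF phi_ideal[OF gm Q]]])
      then show "r \<in> ?phi" using sum_gcomp[OF gd, of r] by simp
    qed
    then have "Gr Rg (colon scale (range (scale a))) \<subseteq> Gr Rg ?phi" by (rule Gr_mono)
    then show "Gr Rg (colon scale (range (scale a))) \<subseteq> ?phi"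
      using prime_Gr[OF gr phi_prime[OF gm Q]] by simp
  qed
qed

lemma Va_closed:
  assumes a: "a \<in> hset Rg"
  shows "qp_closed Rg Mg scale {Q \<in> qpSpec Rg Mg scale. a \<in> Gr Rg (colon scale Q)}"
proof -
  obtain g0 where g0: "a \<in> Rg g0" using a unfolding hset_iff by blast
  have K: "gr_submodule Mg scale (range (scale a))" by (rule range_scale_gr[OF gm g0])
  have "qpVM Rg Mg scale (range (scale a)) = {Q \<in> qpSpec Rg Mg scale. a \<in> Gr Rg (colon scale Q)}"
    unfolding qpVM_def
  proof (rule Collect_cong)
    fix Q show "(Q \<in> qpSpec Rg Mg scale \<and> Gr Rg (colon scale (range (scale a))) \<subseteq> Gr Rg (colon scale Q)) =
      (Q \<in> qpSpec Rg Mg scale \<and> a \<in> Gr Rg (colon scale Q))"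
      using Va_iff[OF a, of Q] by auto
  qed
  then show ?thesis unfolding qp_closed_def using K by auto
qed

lemma pM_Gr:
  assumes Q0: "Q0 \<in> qpSpec Rg Mg scale"
  shows "Gr Rg (colon scale (ideal_times_M scale (Gr Rg (colon scale Q0)))) = Gr Rg (colon scale Q0)"
proof -
  have gr: "graded_ring Rg" using gm by (rule gm_ring)
  have md: "module scale" using gm by (rule gm_mod)
  let ?p = "Gr Rg (colon scale Q0)"
  let ?pM = "ideal_times_M scale ?p"
  have pp: "gr_prime_ideal Rg ?p" by (rule phi_prime[OF gm Q0])
  have pG: "Gr Rg ?p = ?p" by (rule prime_Gr[OF gr pp])
  have "colon scale Q0 \<subseteq> ?p" by (rule colon_sub_Gr[OF gm qpSpecD(1)[OF Q0]])
  then obtain P where P: "gr_prime_sub Rg Mg scale P" "Q0 \<subseteq> P" "colon scale P = ?p"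
    using qpSpecD(4)[OF Q0] pp unfolding primeful_def by blast
  have Psub: "module.subspace scale P" using P(1) by (simp add: gr_prime_sub_def gr_submodule_def)
  have gen: "{scale r m |r m. r \<in> ?p} \<subseteq> P"
  proof
    fix y assume "y \<in> {scale r m |r m. r \<in> ?p}"
    then obtain r m where "y = scale r m" "r \<in> ?p" by blast
    then have "r \<in> colon scale P" using P(3) by simp
    then show "y \<in> P" using \<open>y = scale r m\<close> unfolding colon_def by simp
  qed
  have "?pM \<subseteq> P" unfolding ideal_times_M_def by (rule module.span_minimal[OF md gen Psub])
  then have "colon scale ?pM \<subseteq> colon scale P" unfolding colon_def by blast
  then have "colon scale ?pM \<subseteq> ?p" using P(3) by simp
  then have 1: "Gr Rg (colon scale ?pM) \<subseteq> Gr Rg ?p" by (rule Gr_mono)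
  have "?p \<subseteq> colon scale ?pM"
  proof
    fix r assume r: "r \<in> ?p"
    have "scale r m \<in> ?pM" for m unfolding ideal_times_M_def
      by (rule module.span_base[OF md]) (use r in blast)
    then show "r \<in> colon scale ?pM" unfolding colon_def by simp
  qed
  then have 2: "Gr Rg ?p \<subseteq> Gr Rg (colon scale ?pM)" by (rule Gr_mono)
  show ?thesis using 1 2 pG by simp
qed

definition Vp :: "'a set \<Rightarrow> 'b set set" where
  "Vp p = {Q \<in> qpSpec Rg Mg scale. p \<subseteq> Gr Rg (colon scale Q)}"

definition JJ :: "'b set set \<Rightarrow> 'a set" where
  "JJ B = \<Inter>((\<lambda>Q. Gr Rg (colon scale Q)) ` B)"

lemma JJ_prime:
  assumes B: "qp_irreducible Rg Mg scale B"
  shows "JJ B \<in> VR Rg (Ann scale)"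
proof -
  have gr: "graded_ring Rg" using gm by (rule gm_ring)
  have gd: "graded_decomp Rg" using gm by (rule gm_decR)
  have ne: "B \<noteq> {}" and BS: "B \<subseteq> qpSpec Rg Mg scale"
    and irr: "\<And>A1 A2. qp_closed Rg Mg scale A1 \<Longrightarrow> qp_closed Rg Mg scale A2 \<Longrightarrow> B \<subseteq> A1 \<union> A2 \<Longrightarrow> B \<subseteq> A1 \<or> B \<subseteq> A2"
    using B unfolding qp_irreducible_def by blast+
  have pr: "gr_prime_ideal Rg (Gr Rg (colon scale Q))" if "Q \<in> B" for Q
    using phi_prime[OF gm] BS that by blast
  have iP: "is_ideal (Gr Rg (colon scale Q))" if "Q \<in> B" for Q
    using pr[OF that] by (simp add: gr_prime_ideal_def gr_ideal_def)
  have gP: "graded_subset Rg (Gr Rg (colon scale Q))" if "Q \<in> B" for Q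
    using pr[OF that] by (simp add: gr_prime_ideal_def gr_ideal_def)
  obtain Q0 where Q0: "Q0 \<in> B" using ne by blast
  have JJ_mem: "x \<in> JJ B \<longleftrightarrow> (\<forall>Q\<in>B. x \<in> Gr Rg (colon scale Q))" for x
    unfolding JJ_def by blast
  have "is_ideal (JJ B)" unfolding is_ideal_def
    using ideal_0[OF iP] ideal_add[OF iP] ideal_mult[OF iP] by (auto simp: JJ_mem)
  moreover have "graded_subset Rg (JJ B)" unfolding graded_subset_def
  proof
    fix x assume x: "x \<in> JJ B"
    have "gcomp Rg x g \<in> JJ B" for g
      using graded_subset_dec[OF gd gP _ gcomp_dec[OF gd]] x unfolding JJ_mem by simp
    then show "\<exists>c. hom_dec Rg x c \<and> (\<forall>g. c g \<in> JJ B)"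
      using gcomp_dec[OF gd, of x] by (intro exI[of _ "gcomp Rg x"]) simp
  qed
  moreover have "JJ B \<noteq> UNIV"
  proof
    assume "JJ B = UNIV"
    then have "1 \<in> Gr Rg (colon scale Q0)" using Q0 unfolding JJ_def by blast
    moreover have "Q0 \<in> qpSpec Rg Mg scale" using BS Q0 by blast
    ultimately show False using phi_proper[OF gm] by blast
  qed
  moreover have "a \<in> JJ B \<or> b \<in> JJ B" if ab: "a \<in> hset Rg" "b \<in> hset Rg" "a * b \<in> JJ B" for a b
  proof -
    let ?Va = "{Q \<in> qpSpec Rg Mg scale. a \<in> Gr Rg (colon scale Q)}"
    let ?Vb = "{Q \<in> qpSpec Rg Mg scale. b \<in> Gr Rg (colon scale Q)}"
    have "B \<subseteq> ?Va \<union> ?Vb"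
    proof
      fix Q assume "Q \<in> B"
      then have "a * b \<in> Gr Rg (colon scale Q)" using ab(3) unfolding JJ_def by blast
      moreover have "\<forall>a\<in>hset Rg. \<forall>b\<in>hset Rg. a * b \<in> Gr Rg (colon scale Q) \<longrightarrow> a \<in> Gr Rg (colon scale Q) \<or> b \<in> Gr Rg (colon scale Q)"
        using pr[OF \<open>Q \<in> B\<close>] unfolding gr_prime_ideal_def by blast
      ultimately have "a \<in> Gr Rg (colon scale Q) \<or> b \<in> Gr Rg (colon scale Q)"
        using ab(1,2) by blast
      then show "Q \<in> ?Va \<union> ?Vb" using BS \<open>Q \<in> B\<close> by blast
    qed
    then have "B \<subseteq> ?Va \<or> B \<subseteq> ?Vb" using irr[OF Va_closed[OF ab(1)] Va_closed[OF ab(2)]] by blast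
    then show ?thesis unfolding JJ_mem by blast
  qed
  moreover have "Ann scale \<subseteq> JJ B"
  proof
    fix x assume "x \<in> Ann scale"
    then show "x \<in> JJ B" unfolding JJ_mem using Ann_sub_phi[OF gm] BS by blast
  qed
  ultimately show ?thesis unfolding VR_def gr_prime_ideal_def gr_ideal_def
    by (intro CollectI conjI ballI impI) auto
qed

lemma JJ_VR:
  assumes "qp_irreducible Rg Mg scale B"
  shows "(\<Inter>Q\<in>B. Gr Rg (colon scale Q)) \<in> VR Rg (Ann scale)"
  using JJ_prime[OF assms] unfolding JJ_def .

lemma sub_Vp_JJ: "B \<subseteq> qpSpec Rg Mg scale \<Longrightarrow> B \<subseteq> Vp (JJ B)"
  unfolding Vp_def JJ_def by blast

end



lemma prime_qp:
  assumes gr: "graded_ring Rg" and p: "gr_prime_ideal Rg p"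
  shows "gr_qp_ideal Rg p"
  using p prime_Gr[OF gr p] unfolding gr_qp_ideal_def gr_prime_ideal_def by simp

lemma irr_subset: "qp_irreducible Rg Mg scale B \<Longrightarrow> B \<subseteq> qpSpec Rg Mg scale"
  unfolding qp_irreducible_def by blast

context
  fixes Rg :: "'g::group_add \<Rightarrow> 'a::comm_ring_1 set"
    and Mg :: "'g \<Rightarrow> 'b::ab_group_add set"
    and scale :: "'a \<Rightarrow> 'b \<Rightarrow> 'b"
  assumes gm: "graded_module Rg Mg scale"
    and qpf: "\<forall>q\<in>qpVR Rg (Ann scale). \<exists>Q\<in>qpSpec Rg Mg scale. Gr Rg (colon scale Q) = Gr Rg q"
begin

lemma exQ:
  assumes p: "p \<in> VR Rg (Ann scale)"
  shows "\<exists>Q0\<in>qpSpec Rg Mg scale. Gr Rg (colon scale Q0) = p"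
proof -
  have gr: "graded_ring Rg" using gm by (rule gm_ring)
  have pp: "gr_prime_ideal Rg p" "Ann scale \<subseteq> p" using p unfolding VR_def by auto
  have "p \<in> qpVR Rg (Ann scale)" unfolding qpVR_def using prime_qp[OF gr pp(1)] pp(2) by blast
  then obtain Q where "Q \<in> qpSpec Rg Mg scale" "Gr Rg (colon scale Q) = Gr Rg p" using qpf by blast
  then show ?thesis using prime_Gr[OF gr pp(1)] by auto
qed

lemma qpVM_pM:
  assumes p: "p \<in> VR Rg (Ann scale)"
  shows "qpVM Rg Mg scale (ideal_times_M scale p) = {Q \<in> qpSpec Rg Mg scale. p \<subseteq> Gr Rg (colon scale Q)}"
proof -
  obtain Q0 where Q0: "Q0 \<in> qpSpec Rg Mg scale" "Gr Rg (colon scale Q0) = p" using exQ[OF p] by blast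
  have "Gr Rg (colon scale (ideal_times_M scale p)) = p" using pM_Gr[OF gm Q0(1)] Q0(2) by simp
  then show ?thesis unfolding qpVM_def by simp
qed

lemma Vp_irr:
  assumes p: "p \<in> VR Rg (Ann scale)"
  shows "qp_irreducible Rg Mg scale {Q \<in> qpSpec Rg Mg scale. p \<subseteq> Gr Rg (colon scale Q)}"
  unfolding qp_irreducible_def
proof (intro conjI allI impI)
  let ?V = "{Q \<in> qpSpec Rg Mg scale. p \<subseteq> Gr Rg (colon scale Q)}"
  obtain Q0 where Q0: "Q0 \<in> qpSpec Rg Mg scale" "Gr Rg (colon scale Q0) = p" using exQ[OF p] by blast
  then have Q0V: "Q0 \<in> ?V" by simp
  then show "?V \<noteq> {}" by blast
  show "?V \<subseteq> qpSpec Rg Mg scale" by blast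
  fix A1 A2 assume h: "qp_closed Rg Mg scale A1 \<and> qp_closed Rg Mg scale A2 \<and> ?V \<subseteq> A1 \<union> A2"
  obtain K1 where K1: "A1 = qpVM Rg Mg scale K1" using h unfolding qp_closed_def by blast
  obtain K2 where K2: "A2 = qpVM Rg Mg scale K2" using h unfolding qp_closed_def by blast
  have "Q0 \<in> A1 \<or> Q0 \<in> A2" using h Q0V by blast
  then show "?V \<subseteq> A1 \<or> ?V \<subseteq> A2"
  proof
    assume "Q0 \<in> A1"
    then have "Gr Rg (colon scale K1) \<subseteq> p" using K1 Q0(2) unfolding qpVM_def by simp
    then have "?V \<subseteq> A1" unfolding K1 qpVM_def by blast
    then show ?thesis by blast
  next
    assume "Q0 \<in> A2"
    then have "Gr Rg (colon scale K2) \<subseteq> p" using K2 Q0(2) unfolding qpVM_def by simp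
    then have "?V \<subseteq> A2" unfolding K2 qpVM_def by blast
    then show ?thesis by blast
  qed
qed

lemma Vp_comp:
  assumes p: "p \<in> VR Rg (Ann scale)" and minp: "\<forall>p'\<in>VR Rg (Ann scale). p' \<subseteq> p \<longrightarrow> p' = p"
  shows "{Q \<in> qpSpec Rg Mg scale. p \<subseteq> Gr Rg (colon scale Q)} \<in> qp_irr_components Rg Mg scale"
  unfolding qp_irr_components_def
proof (intro CollectI conjI allI impI)
  let ?V = "{Q \<in> qpSpec Rg Mg scale. p \<subseteq> Gr Rg (colon scale Q)}"
  show "qp_irreducible Rg Mg scale ?V" by (rule Vp_irr[OF p])
  fix B assume h: "qp_irreducible Rg Mg scale B \<and> ?V \<subseteq> B"
  obtain Q0 where Q0: "Q0 \<in> qpSpec Rg Mg scale" "Gr Rg (colon scale Q0) = p" using exQ[OF p] by blast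
  let ?J = "\<Inter>Q\<in>B. Gr Rg (colon scale Q)"
  have JV: "?J \<in> VR Rg (Ann scale)" using JJ_VR[OF gm] h by blast
  have "Q0 \<in> B" using h Q0 by blast
  then have "?J \<subseteq> p" using Q0(2) by blast
  then have "?J = p" using minp JV by blast
  then have "B \<subseteq> ?V" using irr_subset[of Rg Mg scale B] h by blast
  then show "B = ?V" using h by blast
qed

lemma comp_Vp:
  assumes A: "A \<in> qp_irr_components Rg Mg scale"
  shows "\<exists>p\<in>VR Rg (Ann scale). (\<forall>p'\<in>VR Rg (Ann scale). p' \<subseteq> p \<longrightarrow> p' = p) \<and>
     A = {Q \<in> qpSpec Rg Mg scale. p \<subseteq> Gr Rg (colon scale Q)}"
proof -
  have irr: "qp_irreducible Rg Mg scale A" and mx: "\<And>B. qp_irreducible Rg Mg scale B \<Longrightarrow> A \<subseteq> B \<Longrightarrow> B = A"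
    using A unfolding qp_irr_components_def by blast+
  let ?J = "\<Inter>Q\<in>A. Gr Rg (colon scale Q)"
  have JV: "?J \<in> VR Rg (Ann scale)" by (rule JJ_VR[OF gm irr])
  obtain p where p: "p \<in> VR Rg (Ann scale)" "p \<subseteq> ?J" "\<forall>p'\<in>VR Rg (Ann scale). p' \<subseteq> p \<longrightarrow> p' = p"
    using minimal_prime[OF gm_ring[OF gm] JV] by blast
  let ?V = "{Q \<in> qpSpec Rg Mg scale. p \<subseteq> Gr Rg (colon scale Q)}"
  have "A \<subseteq> ?V" using p(2) irr_subset[OF irr] by blast
  then have "?V = A" using mx[OF Vp_irr[OF p(1)]] by blast
  then show ?thesis using p(1,3) by blast
qed

end

theorem theorem4p11:
  fixes Rg :: "'g::group_add \<Rightarrow> 'a::comm_ring_1 set"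
    and Mg :: "'g \<Rightarrow> 'b::ab_group_add set"
    and scale :: "'a \<Rightarrow> 'b \<Rightarrow> 'b"
  assumes "graded_module Rg Mg scale"
    and "quasi_primaryful Rg Mg scale"
  shows "qp_irr_components Rg Mg scale =
    {qpVM Rg Mg scale (ideal_times_M scale (Gr Rg q)) | q.
       q \<in> qpVR Rg (Ann scale) \<and> Gr Rg q \<in> VR Rg (Ann scale) \<and>
       (\<forall>p\<in>VR Rg (Ann scale). p \<subseteq> Gr Rg q \<longrightarrow> p = Gr Rg q)}"
proof (cases "(UNIV :: 'b set) = {0}")
  case True
  have md: "module scale" using assms(1) by (rule gm_mod)
  have "qpSpec Rg Mg scale = {}"
  proof (rule ccontr)
    assume "qpSpec Rg Mg scale \<noteq> {}"
    then obtain Q where Q: "Q \<in> qpSpec Rg Mg scale" by blast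
    have "0 \<in> Q" using module.subspace_0[OF md gr_sub_subspace[OF qpSpecD(1)[OF Q]]] .
    have "x \<in> Q" for x :: 'b
    proof -
      have "x \<in> {0}" using True by simp
      then have "x = 0" by simp
      then show ?thesis using \<open>0 \<in> Q\<close> by simp
    qed
    then have "Q = UNIV" by blast
    then show False using qpSpecD(2)[OF Q] by simp
  qed
  have L: "qp_irr_components Rg Mg scale = {}"
  proof -
    have "\<not> qp_irreducible Rg Mg scale A" for A
      unfolding qp_irreducible_def using \<open>qpSpec Rg Mg scale = {}\<close> by auto
    then show ?thesis unfolding qp_irr_components_def by simp
  qed
  have z: "x = 0" for x :: 'b
  proof -
    have "x \<in> {0}" using True by simp
    then show "x = 0" by simp
  qed
  have "r \<in> Ann scale" for r
  proof -
    have "scale r m \<in> {0}" for m using z[of "scale r m"] by (rule ssubst) (rule insertI1)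
    then show ?thesis unfolding Ann_def colon_def by blast
  qed
  then have "Ann scale = UNIV" by blast
  then have "q \<notin> qpVR Rg (Ann scale)" for q unfolding qpVR_def gr_qp_ideal_def by auto
  then show ?thesis using L by simp
next
  case False
  have gm: "graded_module Rg Mg scale" by (rule assms(1))
  have gr: "graded_ring Rg" using gm by (rule gm_ring)
  have qpf: "\<forall>q\<in>qpVR Rg (Ann scale). \<exists>Q\<in>qpSpec Rg Mg scale. Gr Rg (colon scale Q) = Gr Rg q"
    using assms(2) False unfolding quasi_primaryful_def by blast
  show ?thesis
  proof
    show "qp_irr_components Rg Mg scale \<subseteq> {qpVM Rg Mg scale (ideal_times_M scale (Gr Rg q)) | q.
       q \<in> qpVR Rg (Ann scale) \<and> Gr Rg q \<in> VR Rg (Ann scale) \<and>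
       (\<forall>p\<in>VR Rg (Ann scale). p \<subseteq> Gr Rg q \<longrightarrow> p = Gr Rg q)}"
    proof
      fix A assume "A \<in> qp_irr_components Rg Mg scale"
      then obtain p where p: "p \<in> VR Rg (Ann scale)" "\<forall>p'\<in>VR Rg (Ann scale). p' \<subseteq> p \<longrightarrow> p' = p"
        "A = {Q \<in> qpSpec Rg Mg scale. p \<subseteq> Gr Rg (colon scale Q)}"
        using comp_Vp[OF gm qpf] by blast
      have pp: "gr_prime_ideal Rg p" "Ann scale \<subseteq> p" using p(1) unfolding VR_def by auto
      have Gp: "Gr Rg p = p" by (rule prime_Gr[OF gr pp(1)])
      have "p \<in> qpVR Rg (Ann scale)" unfolding qpVR_def using prime_qp[OF gr pp(1)] pp(2) by blast
      moreover have "A = qpVM Rg Mg scale (ideal_times_M scale (Gr Rg p))"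
        using qpVM_pM[OF gm qpf p(1)] p(3) Gp by simp
      ultimately show "A \<in> {qpVM Rg Mg scale (ideal_times_M scale (Gr Rg q)) | q.
       q \<in> qpVR Rg (Ann scale) \<and> Gr Rg q \<in> VR Rg (Ann scale) \<and>
       (\<forall>p\<in>VR Rg (Ann scale). p \<subseteq> Gr Rg q \<longrightarrow> p = Gr Rg q)}"
        unfolding mem_Collect_eq using p(1,2) Gp by (intro exI[of _ p] conjI) simp_all
    qed
  next
    show "{qpVM Rg Mg scale (ideal_times_M scale (Gr Rg q)) | q.
       q \<in> qpVR Rg (Ann scale) \<and> Gr Rg q \<in> VR Rg (Ann scale) \<and>
       (\<forall>p\<in>VR Rg (Ann scale). p \<subseteq> Gr Rg q \<longrightarrow> p = Gr Rg q)} \<subseteq> qp_irr_components Rg Mg scale"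
    proof
      fix A assume "A \<in> {qpVM Rg Mg scale (ideal_times_M scale (Gr Rg q)) | q.
       q \<in> qpVR Rg (Ann scale) \<and> Gr Rg q \<in> VR Rg (Ann scale) \<and>
       (\<forall>p\<in>VR Rg (Ann scale). p \<subseteq> Gr Rg q \<longrightarrow> p = Gr Rg q)}"
      then obtain q where q: "A = qpVM Rg Mg scale (ideal_times_M scale (Gr Rg q))"
        "Gr Rg q \<in> VR Rg (Ann scale)" "\<forall>p\<in>VR Rg (Ann scale). p \<subseteq> Gr Rg q \<longrightarrow> p = Gr Rg q"
        by blast
      have "A = {Q \<in> qpSpec Rg Mg scale. Gr Rg q \<subseteq> Gr Rg (colon scale Q)}"
        using qpVM_pM[OF gm qpf q(2)] q(1) by simp
      then show "A \<in> qp_irr_components Rg Mg scale" using Vp_comp[OF gm qpf q(2,3)] by simp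
    qed
  qed
qed


end
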